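(* Let $G$ be a group whose abelianization $G_{ab}$ is finitely generated, and let $\bar G=G_{ab}/G_{ab}^{torsion}$. Then there is a generating set $\bar S$ for $\bar G$ and a weight function $\bar f:\bar S\to\mathbb N^+$ such that $\alpha_1(\bar G,L_{\bar G})$ is injective, where $L_{\bar G}$ is the word-length function determined by $\bar f$.
   Context: The word-length function determined by a generating set $\bar S$ and $\bar f:\bar S\to\mathbb N^+$ is $L(g)=\min\{\sum_i\bar f(x_i): g=x_1^{\pm1}\cdots x_r^{\pm1},x_i\in\bar S\}$. For a group $G$ with word-length function $L$, $PH^*(G;\mathbb Q)$ is the cohomology of the subcomplex of the bar cochain complex $\mathrm{Hom}_G(C_*(EG;\mathbb Q),\mathbb Q)$ of $G$-equivariant cochains $\psi$ with $|\psi(1,g_1,\dots,g_n)|\le C(1+\sum_iL(g_i))^k$ for some $C,k$. The inclusion induces $\eta:PH^*(G;\mathbb Q)\to H^*(G;\mathbb Q)$, and $\alpha_*(G,L)$ is the composite $H_*(G;\mathbb Q)\to(H^*(G;\mathbb Q))^*\xrightarrow{\eta^*}(PH^*(G;\mathbb Q))^*$. *)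

theory Defs
  imports Complex_Main "HOL-Algebra.Algebra"
begin

definition abelianization :: "('a, 'b) monoid_scheme \<Rightarrow> 'a set monoid" where
  "abelianization G = G Mod (derived G (carrier G))"

definition torsion_subgroup :: "('a, 'b) monoid_scheme \<Rightarrow> 'a set" where
  "torsion_subgroup H = {x \<in> carrier H. \<exists>n::nat. n > 0 \<and> x [^]\<^bsub>H\<^esub> n = \<one>\<^bsub>H\<^esub>}"

definition free_abelianization :: "('a, 'b) monoid_scheme \<Rightarrow> 'a set set monoid" where
  "free_abelianization G =
     abelianization G Mod torsion_subgroup (abelianization G)"

definition fin_generated :: "('a, 'b) monoid_scheme \<Rightarrow> bool" where
  "fin_generated H \<longleftrightarrow>
     (\<exists>S. finite S \<and> S \<subseteq> carrier H \<and> generate H S = carrier H)"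

definition word_eval :: "('a, 'b) monoid_scheme \<Rightarrow> ('a \<times> bool) list \<Rightarrow> 'a" where
  "word_eval H w =
     foldr (\<lambda>(x, b) acc. (if b then x else inv\<^bsub>H\<^esub> x) \<otimes>\<^bsub>H\<^esub> acc) w \<one>\<^bsub>H\<^esub>"

definition word_length :: "('a, 'b) monoid_scheme \<Rightarrow> 'a set \<Rightarrow> ('a \<Rightarrow> nat) \<Rightarrow> 'a \<Rightarrow> nat" where
  "word_length H S f g =
     (LEAST m. \<exists>w. set (map fst w) \<subseteq> S \<and> word_eval H w = g
                  \<and> sum_list (map (f \<circ> fst) w) = m)"

text \<open>A G-equivariant n-simplex (1, g1, ..., gn) of EG (modulo the G-action) is
  represented by the list [g1,...,gn].  Face i of (1,g1,...,g_{n+1}) deletes the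
  i-th entry (i = 0..n+1) and renormalises the first entry to 1 using the action.\<close>
definition bar_face :: "('a, 'b) monoid_scheme \<Rightarrow> nat \<Rightarrow> 'a list \<Rightarrow> 'a list" where
  "bar_face H i xs =
     (if i = 0 then map (\<lambda>g. inv\<^bsub>H\<^esub> (hd xs) \<otimes>\<^bsub>H\<^esub> g) (tl xs)
      else take (i - 1) xs @ drop i xs)"

definition bar_simplices :: "('a, 'b) monoid_scheme \<Rightarrow> nat \<Rightarrow> 'a list set" where
  "bar_simplices H n = {xs. set xs \<subseteq> carrier H \<and> length xs = n}"

text \<open>n-chains of C_*(EG;Q) (x)_G Q: finitely supported rational combinations of simplices.\<close>
definition is_bar_chain :: "('a, 'b) monoid_scheme \<Rightarrow> nat \<Rightarrow> ('a list \<Rightarrow> rat) \<Rightarrow> bool" where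
  "is_bar_chain H n c \<longleftrightarrow>
     finite {xs. c xs \<noteq> 0} \<and> {xs. c xs \<noteq> 0} \<subseteq> bar_simplices H n"

definition bar_boundary :: "('a, 'b) monoid_scheme \<Rightarrow> ('a list \<Rightarrow> rat) \<Rightarrow> 'a list \<Rightarrow> rat" where
  "bar_boundary H c ys =
     (\<Sum>xs\<in>{xs. c xs \<noteq> 0}. \<Sum>i\<in>{0..length xs}.
        if bar_face H i xs = ys then (-1) ^ i * c xs else 0)"

definition bar_coboundary :: "('a, 'b) monoid_scheme \<Rightarrow> ('a list \<Rightarrow> rat) \<Rightarrow> 'a list \<Rightarrow> rat" where
  "bar_coboundary H \<psi> xs = (\<Sum>i\<in>{0..length xs}. (-1) ^ i * \<psi> (bar_face H i xs))"

definition poly_bounded_cochain ::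
    "('a, 'b) monoid_scheme \<Rightarrow> ('a \<Rightarrow> nat) \<Rightarrow> nat \<Rightarrow> ('a list \<Rightarrow> rat) \<Rightarrow> bool" where
  "poly_bounded_cochain H L n \<psi> \<longleftrightarrow>
     (\<exists>C::real. \<exists>k::nat. \<forall>xs\<in>bar_simplices H n.
        \<bar>real_of_rat (\<psi> xs)\<bar> \<le> C * (1 + real (sum_list (map L xs))) ^ k)"

definition poly_cocycle ::
    "('a, 'b) monoid_scheme \<Rightarrow> ('a \<Rightarrow> nat) \<Rightarrow> nat \<Rightarrow> ('a list \<Rightarrow> rat) \<Rightarrow> bool" where
  "poly_cocycle H L n \<psi> \<longleftrightarrow>
     poly_bounded_cochain H L n \<psi> \<and>
     (\<forall>xs\<in>bar_simplices H (Suc n). bar_coboundary H \<psi> xs = 0)"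

definition kronecker :: "('a list \<Rightarrow> rat) \<Rightarrow> ('a list \<Rightarrow> rat) \<Rightarrow> rat" where
  "kronecker z \<psi> = (\<Sum>xs\<in>{xs. z xs \<noteq> 0}. z xs * \<psi> xs)"

text \<open>alpha_n(H,L) : H_n(H;Q) -> (PH^n(H;Q))^* sends [z] to ([psi] |-> <psi,z>).
  It is injective iff every n-cycle pairing to zero with all polynomially bounded
  n-cocycles is a boundary.\<close>
definition alpha_injective :: "('a, 'b) monoid_scheme \<Rightarrow> ('a \<Rightarrow> nat) \<Rightarrow> nat \<Rightarrow> bool" where
  "alpha_injective H L n \<longleftrightarrow>
     (\<forall>z. is_bar_chain H n z \<and> bar_boundary H z = (\<lambda>_. 0)
          \<and> (\<forall>\<psi>. poly_cocycle H L n \<psi> \<longrightarrow> kronecker z \<psi> = 0)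
          \<longrightarrow> (\<exists>w. is_bar_chain H (Suc n) w \<and> bar_boundary H w = z))"

end

theory Submission
  imports Defs "HOL-Library.Function_Algebras"
begin

lemma (in comm_group) torsion_subgroup_sub:
  shows "subgroup (torsion_subgroup G) G"
  proof (rule subgroupI)
    show "torsion_subgroup G \<subseteq> carrier G" by (auto simp: torsion_subgroup_def)
    show "torsion_subgroup G \<noteq> {}"
      by (auto simp: torsion_subgroup_def intro!: exI[of _ "\<one>"] exI[of _ 1])
  next
    fix a assume "a \<in> torsion_subgroup G"
    then obtain n :: nat where a: "a \<in> carrier G" "n > 0" "a [^] n = \<one>" using \<open>a \<in> torsion_subgroup G\<close> unfolding torsion_subgroup_def by blast
    then show "inv a \<in> torsion_subgroup G"
      by (auto simp: torsion_subgroup_def nat_pow_inv intro!: exI[of _ n])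
  next
    fix a b assume that_ab: "a \<in> torsion_subgroup G" "b \<in> torsion_subgroup G"
    then obtain n m :: nat where a: "a \<in> carrier G" "n > 0" "a [^] n = \<one>"
      and b: "b \<in> carrier G" "m > 0" "b [^] m = \<one>" using that_ab unfolding torsion_subgroup_def by blast
    have "(a \<otimes> b) [^] (n*m) = a [^] (n*m) \<otimes> b [^] (n*m)"
      using a b by (simp add: pow_mult_distrib m_comm)
    also have "\<dots> = \<one>"
      using a b by (metis nat_pow_pow mult.commute nat_pow_one r_one one_closed)
    finally show "a \<otimes> b \<in> torsion_subgroup G"
      using a b by (auto simp: torsion_subgroup_def intro!: exI[of _ "n*m"])
  qed

lemma free_ab_facts:
  assumes "group G" and "fin_generated (abelianization G)"
  shows "group (free_abelianization G) \<and>
    (\<exists>Sb. finite Sb \<and> Sb \<subseteq> carrier (free_abelianization G)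
       \<and> generate (free_abelianization G) Sb = carrier (free_abelianization G))"
proof -
  define A where "A = abelianization G"
  have cA: "comm_group A" unfolding A_def abelianization_def
    using group.derived_quot_is_comm_group[OF assms(1)] .
  then interpret A: comm_group A .
  have nT: "torsion_subgroup A \<lhd> A"
    using A.subgroup_imp_normal[OF A.torsion_subgroup_sub] .
  have gF: "group (free_abelianization G)"
    unfolding free_abelianization_def A_def[symmetric]
    using normal.factorgroup_is_group[OF nT] .
  have hom: "(\<lambda>a. torsion_subgroup A #>\<^bsub>A\<^esub> a) \<in> hom A (A Mod torsion_subgroup A)"
    using normal.r_coset_hom_Mod[OF nT] .
  interpret gh: group_hom A "A Mod torsion_subgroup A" "\<lambda>a. torsion_subgroup A #>\<^bsub>A\<^esub> a"
    using hom normal.factorgroup_is_group[OF nT] A.group_axioms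
    by (simp add: group_hom_def group_hom_axioms_def)
  obtain S where S: "finite S" "S \<subseteq> carrier A" "generate A S = carrier A"
    using assms(2) unfolding fin_generated_def A_def by blast
  let ?h = "\<lambda>a. torsion_subgroup A #>\<^bsub>A\<^esub> a"
  have surj: "?h ` carrier A = carrier (A Mod torsion_subgroup A)"
    by (auto simp: FactGroup_def RCOSETS_def)
  have "generate (A Mod torsion_subgroup A) (?h ` S) = carrier (A Mod torsion_subgroup A)"
    using gh.generate_img[OF S(2)] S(3) surj by simp
  moreover have "?h ` S \<subseteq> carrier (A Mod torsion_subgroup A)"
    using S(2) surj by blast
  ultimately show ?thesis using gF S(1)
    unfolding free_abelianization_def A_def[symmetric] by blast
qed


definition sc :: "rat \<Rightarrow> ('x \<Rightarrow> rat) \<Rightarrow> ('x \<Rightarrow> rat)" where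
  "sc c f = (\<lambda>x. c * f x)"

lemma vs_fun: "vector_space (sc :: rat \<Rightarrow> ('x \<Rightarrow> rat) \<Rightarrow> _)"
  unfolding vector_space_def sc_def by (simp add: fun_eq_iff algebra_simps)

lemma vs_rat: "vector_space ((*) :: rat \<Rightarrow> rat \<Rightarrow> rat)"
  unfolding vector_space_def by (simp add: algebra_simps)

lemma separate:
  fixes Bs :: "('x \<Rightarrow> rat) set"
  assumes "z \<notin> module.span sc Bs"
  shows "\<exists>\<phi>. Vector_Spaces.linear sc ((*) :: rat \<Rightarrow> rat \<Rightarrow> rat) \<phi> \<and> (\<forall>b\<in>Bs. \<phi> b = 0) \<and> \<phi> z = 1"
proof -
  interpret V: vector_space "sc :: rat \<Rightarrow> ('x \<Rightarrow> rat) \<Rightarrow> _" by (rule vs_fun)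
  interpret VP: vector_space_pair "sc :: rat \<Rightarrow> ('x \<Rightarrow> rat) \<Rightarrow> _" "(*) :: rat \<Rightarrow> rat \<Rightarrow> rat"
    unfolding vector_space_pair_def using vs_fun vs_rat by blast
  obtain Bb where Bb: "Bb \<subseteq> V.span Bs" "V.independent Bb" "V.span Bs \<subseteq> V.span Bb"
    using V.maximal_independent_subset[of "V.span Bs"] by blast
  have "V.span Bb \<subseteq> V.span Bs" using V.span_mono[OF Bb(1)] V.span_span by simp
  then have zn: "z \<notin> V.span Bb" using assms by blast
  then have ind: "V.independent (insert z Bb)" using V.independent_insertI Bb(2) by blast
  obtain \<phi> where phi: "Vector_Spaces.linear sc (*) \<phi>" "\<forall>x\<in>insert z Bb. \<phi> x = (if x = z then 1 else 0)"
    using VP.linear_independent_extend[OF ind, of "\<lambda>x. if x = z then 1 else 0"] by blast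
  have zB: "z \<notin> Bb" using zn V.span_base by blast
  have "\<forall>b\<in>Bs. \<phi> b = 0"
  proof
    fix b assume "b \<in> Bs"
    then have "b \<in> V.span Bb" using Bb(3) V.span_base by blast
    then show "\<phi> b = 0"
      using VP.linear_eq_0_on_span[OF phi(1), of Bb b] phi(2) zB by force
  qed
  then show ?thesis using phi by auto
qed


definition dl :: "'x \<Rightarrow> 'x \<Rightarrow> rat" where
  "dl xs = (\<lambda>ys. if ys = xs then 1 else 0)"

lemma sum_app: "(\<Sum>i\<in>A. f i) x = (\<Sum>i\<in>A. f i x)"
  by (induct A rule: infinite_finite_induct) auto

definition KK :: "('a, 'b) monoid_scheme \<Rightarrow> 'a list \<Rightarrow> 'a list \<Rightarrow> rat" where
  "KK H xs ys = (\<Sum>i\<in>{0..length xs}. if bar_face H i xs = ys then (-1) ^ i else 0)"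

lemma bb_gen:
  assumes "finite S" "{xs. c xs \<noteq> 0} \<subseteq> S"
  shows "bar_boundary H c ys = (\<Sum>xs\<in>S. c xs * KK H xs ys)"
proof -
  have inner: "(\<Sum>i\<in>{0..length xs}. if bar_face H i xs = ys then (-1) ^ i * c xs else 0)
      = c xs * KK H xs ys" for xs
    unfolding KK_def sum_distrib_left by (rule sum.cong) auto
  have "bar_boundary H c ys = (\<Sum>xs\<in>{xs. c xs \<noteq> 0}. c xs * KK H xs ys)"
    unfolding bar_boundary_def inner ..
  also have "\<dots> = (\<Sum>xs\<in>S. c xs * KK H xs ys)"
    by (rule sum.mono_neutral_left) (use assms in auto)
  finally show ?thesis .
qed

lemma supp_dl: "{ys. dl xs ys \<noteq> 0} = {xs}"
  by (auto simp: dl_def)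

lemma bb_dl: "bar_boundary H (dl xs) = (\<Sum>i\<in>{0..length xs}. sc ((-1) ^ i) (dl (bar_face H i xs)))"
proof
  fix ys
  have "bar_boundary H (dl xs) ys = KK H xs ys"
    using bb_gen[of "{xs}" "dl xs" H ys] by (simp add: supp_dl dl_def)
  then show "bar_boundary H (dl xs) ys = (\<Sum>i\<in>{0..length xs}. sc ((-1) ^ i) (dl (bar_face H i xs))) ys"
    unfolding sum_app KK_def sc_def dl_def by (auto intro: sum.cong)
qed

lemma span_bound:
  fixes H :: "('x, 'b) monoid_scheme"
  shows "module.span sc {bar_boundary H (dl xs) | xs. xs \<in> bar_simplices H m}
     \<subseteq> {v. \<exists>w. is_bar_chain H m w \<and> bar_boundary H w = v}"
proof -
  interpret V: vector_space "sc :: rat \<Rightarrow> ('x list \<Rightarrow> rat) \<Rightarrow> _" by (rule vs_fun)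
  show ?thesis
  proof (rule V.span_minimal)
    show "{bar_boundary H (dl xs) | xs. xs \<in> bar_simplices H m}
       \<subseteq> {v. \<exists>w. is_bar_chain H m w \<and> bar_boundary H w = v}"
    proof (intro subsetI)
      fix v assume "v \<in> {bar_boundary H (dl xs) | xs. xs \<in> bar_simplices H m}"
      then obtain xs where "xs \<in> bar_simplices H m" "v = bar_boundary H (dl xs)" by blast
      then show "v \<in> {v. \<exists>w. is_bar_chain H m w \<and> bar_boundary H w = v}"
        by (auto simp: is_bar_chain_def supp_dl dl_def split: if_splits intro!: exI[of _ "dl xs"])
    qed
    show "V.subspace {v. \<exists>w. is_bar_chain H m w \<and> bar_boundary H w = v}"
    proof (rule V.subspaceI)
      have "bar_boundary H (\<lambda>_. 0) = 0" by (simp add: bar_boundary_def fun_eq_iff)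
      then show "0 \<in> {v. \<exists>w. is_bar_chain H m w \<and> bar_boundary H w = v}"
        by (auto simp: is_bar_chain_def intro!: exI[of _ "\<lambda>_. 0"])
    next
      fix x y assume "x \<in> {v. \<exists>w. is_bar_chain H m w \<and> bar_boundary H w = v}"
        "y \<in> {v. \<exists>w. is_bar_chain H m w \<and> bar_boundary H w = v}"
      then obtain w1 w2 where w: "is_bar_chain H m w1" "bar_boundary H w1 = x"
        "is_bar_chain H m w2" "bar_boundary H w2 = y" by blast
      define S where "S = {xs. w1 xs \<noteq> 0} \<union> {xs. w2 xs \<noteq> 0}"
      have fS: "finite S" using w unfolding S_def is_bar_chain_def by auto
      have s1: "{xs. w1 xs \<noteq> 0} \<subseteq> S" "{xs. w2 xs \<noteq> 0} \<subseteq> S" "{xs. (w1 + w2) xs \<noteq> 0} \<subseteq> S"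
        unfolding S_def by auto
      have ch: "is_bar_chain H m (w1 + w2)"
        using w s1(3) fS unfolding is_bar_chain_def S_def by (auto intro: finite_subset)
      have "bar_boundary H (w1 + w2) = x + y"
      proof
        fix ys show "bar_boundary H (w1 + w2) ys = (x + y) ys"
          using bb_gen[OF fS s1(3), of H ys] bb_gen[OF fS s1(1), of H ys] bb_gen[OF fS s1(2), of H ys] w
          by (simp add: sum.distrib algebra_simps plus_fun_def)
      qed
      then show "x + y \<in> {v. \<exists>w. is_bar_chain H m w \<and> bar_boundary H w = v}" using ch by blast
    next
      fix c x assume "x \<in> {v. \<exists>w. is_bar_chain H m w \<and> bar_boundary H w = v}"
      then obtain w where w: "is_bar_chain H m w" "bar_boundary H w = x" by blast
      define S where "S = {xs. w xs \<noteq> 0}"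
      have fS: "finite S" using w unfolding S_def is_bar_chain_def by auto
      have s1: "{xs. w xs \<noteq> 0} \<subseteq> S" "{xs. sc c w xs \<noteq> 0} \<subseteq> S"
        unfolding S_def sc_def by auto
      have ch: "is_bar_chain H m (sc c w)"
        using w s1(2) fS unfolding is_bar_chain_def S_def by (auto intro: finite_subset)
      have "bar_boundary H (sc c w) = sc c x"
      proof
        fix ys show "bar_boundary H (sc c w) ys = sc c x ys"
          using bb_gen[OF fS s1(2), of H ys] bb_gen[OF fS s1(1), of H ys] w
          by (simp add: sc_def sum_distrib_left algebra_simps)
      qed
      then show "sc c x \<in> {v. \<exists>w. is_bar_chain H m w \<and> bar_boundary H w = v}" using ch by blast
    qed
  qed
qed


section \<open>Cocycles are polynomially bounded\<close>

lemma word_eval_Cons: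
  "word_eval H ((x, b) # w) = (if b then x else inv\<^bsub>H\<^esub> x) \<otimes>\<^bsub>H\<^esub> word_eval H w"
  by (simp add: word_eval_def)

lemma word_eval_Nil: "word_eval H [] = \<one>\<^bsub>H\<^esub>"
  by (simp add: word_eval_def)

lemma sum_list_one: "sum_list (map ((\<lambda>_. 1::nat) \<circ> fst) w) = length w"
  by (induct w) auto

context group
begin

lemma word_eval_closed: "set (map fst w) \<subseteq> carrier G \<Longrightarrow> word_eval G w \<in> carrier G"
  by (induct w) (auto simp: word_eval_Cons word_eval_Nil)

lemma word_eval_append:
  "set (map fst w1) \<subseteq> carrier G \<Longrightarrow> set (map fst w2) \<subseteq> carrier G \<Longrightarrow>
   word_eval G (w1 @ w2) = word_eval G w1 \<otimes> word_eval G w2"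
  by (induct w1) (auto simp: word_eval_Cons word_eval_Nil m_assoc word_eval_closed)

lemma word_exists:
  assumes "Sb \<subseteq> carrier G" "g \<in> generate G Sb"
  shows "\<exists>w. set (map fst w) \<subseteq> Sb \<and> word_eval G w = g"
  using assms(2)
proof induct
  case one then show ?case by (auto simp: word_eval_Nil intro!: exI[of _ "[]"])
next
  case (incl h) then show ?case using assms(1)
    by (auto simp: word_eval_Cons word_eval_Nil intro!: exI[of _ "[(h, True)]"])
next
  case (inv h) then show ?case using assms(1)
    by (auto simp: word_eval_Cons word_eval_Nil intro!: exI[of _ "[(h, False)]"])
next
  case (eng h1 h2)
  then obtain w1 w2 where "set (map fst w1) \<subseteq> Sb" "word_eval G w1 = h1"
    "set (map fst w2) \<subseteq> Sb" "word_eval G w2 = h2" by blast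
  then show ?case using assms(1)
    by (intro exI[of _ "w1 @ w2"]) (auto simp: word_eval_append)
qed

lemma cocycle_bound:
  assumes cocyc: "\<forall>xs\<in>bar_simplices G 2. bar_coboundary G \<psi> xs = 0"
    and Sb: "finite Sb" "Sb \<subseteq> carrier G" "generate G Sb = carrier G"
  shows "poly_bounded_cochain G (word_length G Sb (\<lambda>_. 1)) 1 \<psi>"
proof -
  have cyc: "\<psi> [inv a \<otimes> b] - \<psi> [b] + \<psi> [a] = 0" if "a \<in> carrier G" "b \<in> carrier G" for a b
  proof -
    have "[a, b] \<in> bar_simplices G 2" using that by (auto simp: bar_simplices_def)
    then have "bar_coboundary G \<psi> [a, b] = 0" using cocyc by blast
    then show ?thesis
      by (simp add: bar_coboundary_def bar_face_def numeral_2_eq_2 sum.atLeast0_atMost_Suc)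
  qed
  have p1: "\<psi> [\<one>] = 0" using cyc[of \<one> \<one>] by simp
  have pinv: "\<psi> [inv a] = - \<psi> [a]" if "a \<in> carrier G" for a
    using cyc[of a \<one>] that p1 by simp
  have pmul: "\<psi> [a \<otimes> b] = \<psi> [a] + \<psi> [b]" if "a \<in> carrier G" "b \<in> carrier G" for a b
    using cyc[of "inv a" b] that pinv[of a] by simp
  define M where "M = (\<Sum>s\<in>Sb. \<bar>\<psi> [s]\<bar>)"
  have M0: "M \<ge> 0" unfolding M_def by (rule sum_nonneg) auto
  have sM: "\<bar>\<psi> [s]\<bar> \<le> M" if "s \<in> Sb" for s
    unfolding M_def using Sb(1) that by (intro member_le_sum) auto
  have wb: "\<bar>\<psi> [word_eval G w]\<bar> \<le> M * of_nat (length w)" if "set (map fst w) \<subseteq> Sb" for w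
    using that
  proof (induct w)
    case Nil then show ?case by (simp add: word_eval_Nil p1)
  next
    case (Cons p w)
    obtain x b where p: "p = (x, b)" by (cases p)
    have x: "x \<in> Sb" "x \<in> carrier G" using Cons.prems p Sb(2) by auto
    have wc: "word_eval G w \<in> carrier G" using Cons.prems Sb(2) by (intro word_eval_closed) auto
    have IH: "\<bar>\<psi> [word_eval G w]\<bar> \<le> M * of_nat (length w)" using Cons by auto
    have "\<bar>\<psi> [word_eval G (p # w)]\<bar> = \<bar>(if b then \<psi> [x] else - \<psi> [x]) + \<psi> [word_eval G w]\<bar>"
      using x wc by (simp add: p word_eval_Cons pmul pinv)
    also have "\<dots> \<le> \<bar>\<psi> [x]\<bar> + \<bar>\<psi> [word_eval G w]\<bar>" using abs_triangle_ineq[of "if b then \<psi> [x] else - \<psi> [x]" "\<psi> [word_eval G w]"] by (cases b) auto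
    also have "\<dots> \<le> M + M * of_nat (length w)" using sM[OF x(1)] IH by linarith
    finally show ?case by (simp add: algebra_simps)
  qed
  show ?thesis unfolding poly_bounded_cochain_def
  proof (intro exI[of _ "real_of_rat M"] exI[of _ "1::nat"] ballI)
    fix xs assume "xs \<in> bar_simplices G 1"
    then have xs1: "length xs = 1" "set xs \<subseteq> carrier G" by (auto simp: bar_simplices_def)
    then obtain g where g: "xs = [g]" "g \<in> carrier G"
      by (cases xs) auto
    obtain w0 where "set (map fst w0) \<subseteq> Sb" "word_eval G w0 = g"
      using word_exists[OF Sb(2)] g Sb(3) by blast
    then have ex: "\<exists>m w. set (map fst w) \<subseteq> Sb \<and> word_eval G w = g \<and> sum_list (map ((\<lambda>_. 1) \<circ> fst) w) = m"
      by blast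
    let ?P = "\<lambda>m. \<exists>w. set (map fst w) \<subseteq> Sb \<and> word_eval G w = g \<and> sum_list (map ((\<lambda>_. 1::nat) \<circ> fst) w) = m"
    have PL: "?P (LEAST m. ?P m)" by (rule LeastI_ex[of ?P, OF ex])
    have wl: "word_length G Sb (\<lambda>_. 1) g = (LEAST m. ?P m)" by (simp only: word_length_def)
    from PL obtain w where w0: "set (map fst w) \<subseteq> Sb" "word_eval G w = g"
      "sum_list (map ((\<lambda>_. 1::nat) \<circ> fst) w) = (LEAST m. ?P m)" by blast
    have w: "set (map fst w) \<subseteq> Sb" "word_eval G w = g"
      "length w = word_length G Sb (\<lambda>_. 1) g"
      using w0 wl sum_list_one[of w] by auto
    have "\<bar>\<psi> xs\<bar> \<le> M * of_nat (word_length G Sb (\<lambda>_. 1) g)"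
      using wb[OF w(1)] w g by simp
    also have "\<dots> \<le> M * (1 + of_nat (word_length G Sb (\<lambda>_. 1) g))"
      using M0 by (simp add: mult_left_mono)
    finally have r: "\<bar>\<psi> xs\<bar> \<le> M * (1 + of_nat (word_length G Sb (\<lambda>_. 1) g))" .
    have "\<bar>real_of_rat (\<psi> xs)\<bar> \<le> real_of_rat (M * (1 + of_nat (word_length G Sb (\<lambda>_. 1) g)))"
      using r unfolding abs_le_iff by (simp add: of_rat_less_eq flip: of_rat_minus)
    also have "\<dots> = real_of_rat M * (1 + real (sum_list (map (word_length G Sb (\<lambda>_. 1)) xs))) ^ 1"
      using g by (simp add: of_rat_mult of_rat_add)
    finally show "\<bar>real_of_rat (\<psi> xs)\<bar> \<le> real_of_rat M * (1 + real (sum_list (map (word_length G Sb (\<lambda>_. 1)) xs))) ^ 1" .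
  qed
qed

end


theorem lemma1p4p1:
  fixes G :: "('a, 'c) monoid_scheme"
  assumes "group G"
    and "fin_generated (abelianization G)"
  shows "\<exists>(Sb :: 'a set set set) (fb :: 'a set set \<Rightarrow> nat).
           Sb \<subseteq> carrier (free_abelianization G)
         \<and> generate (free_abelianization G) Sb = carrier (free_abelianization G)
         \<and> (\<forall>s\<in>Sb. fb s > 0)
         \<and> alpha_injective (free_abelianization G)
               (word_length (free_abelianization G) Sb fb) 1"
proof -
  define H where "H = free_abelianization G"
  obtain Sb where gH: "group H" and Sb: "finite Sb" "Sb \<subseteq> carrier H" "generate H Sb = carrier H"
    using free_ab_facts[OF assms] unfolding H_def by blast
  interpret H: group H by (rule gH)
  have "alpha_injective H (word_length H Sb (\<lambda>_. 1)) 1"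
    unfolding alpha_injective_def
  proof (intro allI impI)
    fix z assume z: "is_bar_chain H 1 z \<and> bar_boundary H z = (\<lambda>_. 0)
          \<and> (\<forall>\<psi>. poly_cocycle H (word_length H Sb (\<lambda>_. 1)) 1 \<psi> \<longrightarrow> kronecker z \<psi> = 0)"
    show "\<exists>w. is_bar_chain H (Suc 1) w \<and> bar_boundary H w = z"
    proof (rule ccontr)
      assume nw: "\<not> ?thesis"
      let ?Bg = "{bar_boundary H (dl xs) | xs. xs \<in> bar_simplices H (Suc 1)}"
      have "z \<notin> module.span sc ?Bg" using span_bound[of H "Suc 1"] nw by blast
      then obtain \<phi> where phi: "Vector_Spaces.linear sc ((*) :: rat \<Rightarrow> rat \<Rightarrow> rat) \<phi>"
        "\<forall>b\<in>?Bg. \<phi> b = 0" "\<phi> z = 1"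
        using separate by blast
      interpret L: Vector_Spaces.linear sc "(*) :: rat \<Rightarrow> rat \<Rightarrow> rat" \<phi> by (rule phi(1))
      define \<psi> where "\<psi> xs = \<phi> (dl xs)" for xs
      have cob: "bar_coboundary H \<psi> xs = \<phi> (bar_boundary H (dl xs))" for xs
        unfolding bb_dl bar_coboundary_def \<psi>_def by (simp add: L.sum L.scale)
      have cocyc: "\<forall>xs\<in>bar_simplices H 2. bar_coboundary H \<psi> xs = 0"
        using phi(2) cob by (auto simp: numeral_2_eq_2)
      have pc: "poly_cocycle H (word_length H Sb (\<lambda>_. 1)) 1 \<psi>"
        unfolding poly_cocycle_def
        using H.cocycle_bound[OF cocyc Sb] cocyc by (simp add: numeral_2_eq_2)
      have fz: "finite {xs. z xs \<noteq> 0}" using z by (simp add: is_bar_chain_def)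
      have zsum: "z = (\<Sum>xs\<in>{xs. z xs \<noteq> 0}. sc (z xs) (dl xs))"
      proof
        fix ys
        have "(\<Sum>xs\<in>{xs. z xs \<noteq> 0}. sc (z xs) (dl xs)) ys
            = (\<Sum>xs\<in>{xs. z xs \<noteq> 0}. if ys = xs then z xs else 0)"
          unfolding sum_app sc_def dl_def by (rule sum.cong) auto
        also have "\<dots> = z ys" using fz by (simp add: sum.delta)
        finally show "z ys = (\<Sum>xs\<in>{xs. z xs \<noteq> 0}. sc (z xs) (dl xs)) ys" by simp
      qed
      have "kronecker z \<psi> = \<phi> z"
        unfolding kronecker_def \<psi>_def by (subst (2) zsum) (simp add: L.sum L.scale)
      then have "kronecker z \<psi> = 1" using phi(3) by simp
      moreover have "kronecker z \<psi> = 0" using z pc by blast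
      ultimately show False by simp
    qed
  qed
  then show ?thesis unfolding H_def[symmetric] using Sb
    by (intro exI[of _ Sb] exI[of _ "\<lambda>_. 1"]) auto
qed

end
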